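(* Let $C$ be a locally optimal coloring of $E(K_n)$. Then for every color $i$ and every edge $uv$ of color $i$, we have $a_{u,i}+a_{v,i}\le 3$. Consequently every color class of $C$ is a vertex-disjoint union of single edges and paths with two edges.
   Context: A coloring is any map $C:E(K_n)\to\{1,\dots,n-1\}$, not necessarily proper ($n\ge 2$). For a vertex $u$ and color $\mu$, $a_{u,\mu}$ is the number of $\mu$-colored edges incident with $u$, and $\Psi(C)=\sum_{u,\mu}\binom{a_{u,\mu}}{2}$. A coloring $C$ is locally optimal if every coloring $C'$ that differs from $C$ on exactly one edge satisfies $\Psi(C')\ge \Psi(C)$. *)

theory Defs
  imports Main
begin

definition Kedges :: "nat \<Rightarrow> nat set set" where
  "Kedges n = {e. \<exists>u v. u < n \<and> v < n \<and> u \<noteq> v \<and> e = {u, v}}"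

text \<open>A coloring: every edge gets a color in {1..n-1} (not necessarily proper).\<close>
definition is_coloring :: "nat \<Rightarrow> (nat set \<Rightarrow> nat) \<Rightarrow> bool" where
  "is_coloring n C \<longleftrightarrow> (\<forall>e \<in> Kedges n. C e \<in> {1..n-1})"

definition adeg :: "nat \<Rightarrow> (nat set \<Rightarrow> nat) \<Rightarrow> nat \<Rightarrow> nat \<Rightarrow> nat" where
  "adeg n C u \<mu> = card {e \<in> Kedges n. u \<in> e \<and> C e = \<mu>}"

definition Psi :: "nat \<Rightarrow> (nat set \<Rightarrow> nat) \<Rightarrow> nat" where
  "Psi n C = (\<Sum>u<n. \<Sum>\<mu>\<in>{1..n-1}. adeg n C u \<mu> choose 2)"

definition locally_optimal :: "nat \<Rightarrow> (nat set \<Rightarrow> nat) \<Rightarrow> bool" where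
  "locally_optimal n C \<longleftrightarrow> is_coloring n C \<and>
     (\<forall>C'. is_coloring n C' \<and> card {e \<in> Kedges n. C' e \<noteq> C e} = 1 \<longrightarrow> Psi n C' \<ge> Psi n C)"

definition color_class :: "nat \<Rightarrow> (nat set \<Rightarrow> nat) \<Rightarrow> nat \<Rightarrow> nat set set" where
  "color_class n C i = {e \<in> Kedges n. C e = i}"

definition edge_or_P3 :: "nat set set \<Rightarrow> bool" where
  "edge_or_P3 p \<longleftrightarrow> (\<exists>a b. a \<noteq> b \<and> p = {{a, b}}) \<or>
     (\<exists>a b c. a \<noteq> b \<and> b \<noteq> c \<and> a \<noteq> c \<and> p = {{a, b}, {b, c}})"

end

theory Submission imports Defs begin

lemma S_le2:
  assumes "finite S" "card S \<le> 2" "e \<in> S" "f \<in> S" "e \<noteq> f"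
  shows "S = {e,f}"
proof -
  have "{e,f} \<subseteq> S" using assms by auto
  moreover have "card {e,f} = 2" using assms by auto
  ultimately show ?thesis using assms card_mono[of S "{e,f}"] card_subset_eq[of S "{e,f}"] by auto
qed

lemma S_eq1:
  assumes "card S = 1" "e \<in> S"
  shows "S = {e}"
  using assms by (metis card_1_singletonE singletonD)

lemma decomp:
  fixes E :: "nat set set"
  assumes fin: "\<And>x. finite {f\<in>E. x\<in>f}"
    and two: "\<And>e. e\<in>E \<Longrightarrow> \<exists>u v. u\<noteq>v \<and> e={u,v}"
    and deg: "\<And>u v. {u,v}\<in>E \<Longrightarrow> card {f\<in>E. u\<in>f} + card {f\<in>E. v\<in>f} \<le> 3"
  shows "\<exists>P. \<Union>P = E \<and> (\<forall>p\<in>P. edge_or_P3 p) \<and> (\<forall>p\<in>P. \<forall>q\<in>P. p\<noteq>q \<longrightarrow> \<Union>p \<inter> \<Union>q = {})"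
proof -
  define S where "S x = {f\<in>E. x\<in>f}" for x
  define pe where "pe e = {f\<in>E. f \<inter> e \<noteq> {}}" for e
  have finS: "finite (S x)" for x using fin S_def by auto
  have ge1: "card (S x) \<ge> 1" if "e \<in> E" "x \<in> e" for e x
  proof -
    have "e \<in> S x" using that S_def by auto
    then show ?thesis using finS[of x] by (metis One_nat_def Suc_leI card_gt_0_iff empty_iff)
  qed
  have degS: "card (S u) + card (S v) \<le> 3" if "{u,v} \<in> E" for u v
    using deg[OF that] S_def by simp
  have pe2: "pe {u,v} = S u \<union> S v" for u v
    unfolding pe_def S_def by auto
  have A: "pe e = pe f" if e: "e\<in>E" and f: "f\<in>E" and x: "x\<in>e" "x\<in>f" for e f x
  proof (cases "e = f")
    case True then show ?thesis by simp
  next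
    case False
    obtain a b where ab: "a\<noteq>b" "e={a,b}" using two[OF e] by blast
    obtain u where u: "e = {x,u}" "u \<noteq> x" using ab x by auto
    obtain c d where cd: "c\<noteq>d" "f={c,d}" using two[OF f] by blast
    obtain w where w: "f = {x,w}" "w \<noteq> x" using cd x by auto
    have uw: "u \<noteq> w" using False u w by auto
    have "{e,f} \<subseteq> S x" using e f x S_def by auto
    hence cx: "card (S x) \<ge> 2" using False finS[of x] card_mono[of "S x" "{e,f}"] by auto
    have du: "card (S u) \<ge> 1" using ge1[OF e] u by auto
    have dw: "card (S w) \<ge> 1" using ge1[OF f] w by auto
    have c1: "card (S x) + card (S u) \<le> 3" using degS[of x u] e u by simp
    have c2: "card (S x) + card (S w) \<le> 3" using degS[of x w] f w by simp
    have Sx: "S x = {e,f}" using S_le2[OF finS, of x e f] c1 du False e f x S_def by auto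
    have Su: "S u = {e}" using S_eq1[of "S u" e] c1 cx du e u S_def by auto
    have Sw: "S w = {f}" using S_eq1[of "S w" f] c2 cx dw f w S_def by auto
    have "pe e = {e,f}" using pe2[of x u] u Sx Su by auto
    moreover have "pe f = {e,f}" using pe2[of x w] w Sx Sw by auto
    ultimately show ?thesis by simp
  qed
  have C: "edge_or_P3 (pe e)" if e: "e \<in> E" for e
  proof -
    obtain u v where uv: "u\<noteq>v" "e={u,v}" using two[OF e] by blast
    have du: "card (S u) \<ge> 1" and dv: "card (S v) \<ge> 1" using ge1[OF e] uv by auto
    have c: "card (S u) + card (S v) \<le> 3" using degS[of u v] e uv by simp
    have eu: "e \<in> S u" and ev: "e \<in> S v" using e uv S_def by auto
    have P3: "edge_or_P3 (pe e)" if a2: "card (S a) = 2" and b1: "card (S b) = 1" and eab: "e = {a,b}" "a \<noteq> b" for a b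
    proof -
      have ea: "e \<in> S a" and eb: "e \<in> S b" using e eab S_def by auto
      obtain f where f: "f \<in> S a" "f \<noteq> e"
      proof -
        obtain x y where "S a = {x,y}" "x \<noteq> y" using a2 unfolding card_2_iff by blast
        then show ?thesis using that ea by (cases "x = e") auto
      qed
      have Sa: "S a = {e,f}" using S_le2[OF finS, of a e f] f ea a2 by auto
      have Sb: "S b = {e}" using S_eq1[OF b1 eb] .
      have fE: "f \<in> E" "a \<in> f" using f S_def by auto
      obtain w where w: "f = {a,w}" "w \<noteq> a" using two[OF fE(1)] fE(2) by auto
      have "w \<noteq> b" using w f eab by auto
      moreover have "pe e = {{b,a},{a,w}}" using pe2[of a b] eab Sa Sb w by auto
      ultimately show ?thesis unfolding edge_or_P3_def using w eab by blast
    qed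
    show ?thesis
    proof (cases "card (S u) = 1 \<and> card (S v) = 1")
      case True
      then have "S u = {e}" "S v = {e}" using S_eq1[OF _ eu] S_eq1[OF _ ev] by auto
      then have "pe e = {{u,v}}" using pe2[of u v] uv by auto
      then show ?thesis unfolding edge_or_P3_def using uv by blast
    next
      case False
      then have "(card (S u) = 2 \<and> card (S v) = 1) \<or> (card (S v) = 2 \<and> card (S u) = 1)"
        using du dv c by auto
      then show ?thesis using P3[of u v] P3[of v u] uv by (auto simp: insert_commute)
    qed
  qed
  show ?thesis
  proof (intro exI conjI)
    show "\<Union>(pe ` E) = E"
    proof
      show "\<Union>(pe ` E) \<subseteq> E" unfolding pe_def by auto
      show "E \<subseteq> \<Union>(pe ` E)"
      proof
        fix e assume eE: "e \<in> E"
        then have "e \<noteq> {}" using two by blast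
        then have "e \<in> pe e" using eE pe_def by auto
        then show "e \<in> \<Union>(pe ` E)" using eE by blast
      qed
    qed
    show "\<forall>p\<in>pe ` E. edge_or_P3 p" using C by auto
    show "\<forall>p\<in>pe ` E. \<forall>q\<in>pe ` E. p \<noteq> q \<longrightarrow> \<Union>p \<inter> \<Union>q = {}"
    proof (intro ballI impI)
      fix p q assume p: "p \<in> pe ` E" and q: "q \<in> pe ` E" and ne: "p \<noteq> q"
      obtain e where e: "e \<in> E" "p = pe e" using p by auto
      obtain e' where e': "e' \<in> E" "q = pe e'" using q by auto
      show "\<Union>p \<inter> \<Union>q = {}"
      proof (rule ccontr)
        assume "\<Union>p \<inter> \<Union>q \<noteq> {}"
        then obtain y g g' where g: "g \<in> pe e" "y \<in> g" and g': "g' \<in> pe e'" "y \<in> g'"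
          using e e' by blast
        have gE: "g \<in> E" "g' \<in> E" using g g' pe_def by auto
        obtain z where "z \<in> g" "z \<in> e" using g pe_def by auto
        hence 1: "pe g = pe e" using A gE e by blast
        obtain z' where "z' \<in> g'" "z' \<in> e'" using g' pe_def by auto
        hence 2: "pe g' = pe e'" using A gE e' by blast
        have "pe g = pe g'" using A gE g g' by blast
        then show False using 1 2 e e' ne by simp
      qed
    qed
  qed
qed
lemma Kedges_fin: "finite (Kedges n)"
proof -
  have "Kedges n \<subseteq> Pow {..<n}" unfolding Kedges_def by auto
  then show ?thesis by (rule finite_subset) simp
qed

lemma Kedges_mem: "{u,v} \<in> Kedges n \<Longrightarrow> u < n \<and> v < n \<and> u \<noteq> v"
  unfolding Kedges_def by (auto simp: doubleton_eq_iff)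

lemma inc_card:
  assumes "x < n"
  shows "card {e\<in>Kedges n. x\<in>e} = n - 1"
proof -
  have eq: "{e\<in>Kedges n. x\<in>e} = (\<lambda>w. {x,w}) ` ({..<n} - {x})"
    unfolding Kedges_def using assms by auto
  have "inj_on (\<lambda>w. {x,w}) ({..<n} - {x})"
    by (auto simp: inj_on_def doubleton_eq_iff)
  then have "card {e\<in>Kedges n. x\<in>e} = card ({..<n} - {x})"
    by (simp add: eq card_image)
  also have "\<dots> = n - 1" using assms by simp
  finally show ?thesis .
qed

lemma sum_adeg:
  assumes col: "is_coloring n C" and x: "x < n"
  shows "(\<Sum>\<mu>\<in>{1..n-1}. adeg n C x \<mu>) = n - 1"
proof -
  have "{e\<in>Kedges n. x\<in>e} = (\<Union>\<mu>\<in>{1..n-1}. {e\<in>Kedges n. x\<in>e \<and> C e = \<mu>})"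
    using col unfolding is_coloring_def by auto
  then have "card {e\<in>Kedges n. x\<in>e} = card (\<Union>\<mu>\<in>{1..n-1}. {e\<in>Kedges n. x\<in>e \<and> C e = \<mu>})"
    by simp
  also have "\<dots> = (\<Sum>\<mu>\<in>{1..n-1}. card {e\<in>Kedges n. x\<in>e \<and> C e = \<mu>})"
    by (rule card_UN_disjoint) (auto simp: Kedges_fin)
  finally show ?thesis using inc_card[OF x] unfolding adeg_def by simp
qed

lemma choose2_suc: "(Suc b choose 2) = (b choose 2) + b"
  by (simp add: numeral_2_eq_2)

lemma psi_change:
  assumes uv: "{u,v} \<in> Kedges n" and Ci: "C {u,v} = i" and ij: "i \<noteq> j"
    and iM: "i \<in> {1..n-1}" and jM: "j \<in> {1..n-1}"
  shows "Psi n (C({u,v} := j)) + (adeg n C u i - 1) + (adeg n C v i - 1)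
       = Psi n C + adeg n C u j + adeg n C v j"
proof -
  define C' where "C' = C({u,v} := j)"
  define M where "M = {1..n-1}"
  have un: "u < n" "v < n" "u \<noteq> v" using Kedges_mem[OF uv] by auto
  have same: "adeg n C' x \<mu> = adeg n C x \<mu>" if "x \<notin> {u,v} \<or> (\<mu> \<noteq> i \<and> \<mu> \<noteq> j)" for x \<mu>
  proof -
    have "{e\<in>Kedges n. x\<in>e \<and> C' e = \<mu>} = {e\<in>Kedges n. x\<in>e \<and> C e = \<mu>}"
      using that Ci unfolding C'_def by auto
    then show ?thesis unfolding adeg_def by simp
  qed
  have di: "adeg n C' x i + 1 = adeg n C x i" if "x \<in> {u,v}" for x
  proof -
    have A: "{e\<in>Kedges n. x\<in>e \<and> C' e = i} = {e\<in>Kedges n. x\<in>e \<and> C e = i} - {{u,v}}"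
      using that ij unfolding C'_def by auto
    have mem: "{u,v} \<in> {e\<in>Kedges n. x\<in>e \<and> C e = i}" using uv Ci that by auto
    have fin: "finite {e\<in>Kedges n. x\<in>e \<and> C e = i}" by (simp add: Kedges_fin)
    have "card {e\<in>Kedges n. x\<in>e \<and> C e = i} > 0" using fin mem card_gt_0_iff by blast
    moreover have "card ({e\<in>Kedges n. x\<in>e \<and> C e = i} - {{u,v}}) = card {e\<in>Kedges n. x\<in>e \<and> C e = i} - 1"
      using card_Diff_singleton[OF mem] .
    ultimately show ?thesis unfolding adeg_def A by linarith
  qed
  have dj: "adeg n C' x j = adeg n C x j + 1" if "x \<in> {u,v}" for x
  proof -
    have A: "{e\<in>Kedges n. x\<in>e \<and> C' e = j} = insert {u,v} {e\<in>Kedges n. x\<in>e \<and> C e = j}"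
      using that ij uv unfolding C'_def by auto
    have "{u,v} \<notin> {e\<in>Kedges n. x\<in>e \<and> C e = j}" using Ci ij by auto
    then show ?thesis unfolding adeg_def A by (simp add: Kedges_fin)
  qed
  define g where "g D x = (\<Sum>\<mu>\<in>M. adeg n D x \<mu> choose 2)" for D x
  have gsame: "g C' x = g C x" if "x \<notin> {u,v}" for x
    unfolding g_def using same that by simp
  have gch: "g C' x + (adeg n C x i - 1) = g C x + adeg n C x j" if x: "x \<in> {u,v}" for x
  proof -
    have fin: "finite M" unfolding M_def by simp
    have jM': "j \<in> M - {i}" using jM ij M_def by auto
    have split: "g D x = (adeg n D x i choose 2) + (adeg n D x j choose 2)
        + (\<Sum>\<mu>\<in>M-{i}-{j}. adeg n D x \<mu> choose 2)" for D
    proof -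
      have iM': "i \<in> M" using iM M_def by simp
      have "g D x = (adeg n D x i choose 2) + (\<Sum>\<mu>\<in>M-{i}. adeg n D x \<mu> choose 2)"
        unfolding g_def by (rule sum.remove[OF fin iM'])
      also have "(\<Sum>\<mu>\<in>M-{i}. adeg n D x \<mu> choose 2) = (adeg n D x j choose 2) + (\<Sum>\<mu>\<in>M-{i}-{j}. adeg n D x \<mu> choose 2)"
        by (rule sum.remove) (use fin jM' in auto)
      finally show ?thesis by simp
    qed
    have rest: "(\<Sum>\<mu>\<in>M-{i}-{j}. adeg n C' x \<mu> choose 2) = (\<Sum>\<mu>\<in>M-{i}-{j}. adeg n C x \<mu> choose 2)"
      by (rule sum.cong) (auto simp: same)
    obtain a where a: "adeg n C x i = Suc a" "adeg n C' x i = a" using di[OF x] by (metis add.commute plus_1_eq_Suc)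
    have "adeg n C' x j = Suc (adeg n C x j)" using dj[OF x] by simp
    then show ?thesis using split[of C'] split[of C] rest a by (simp add: choose2_suc)
  qed
  have fin: "finite {..<n}" by simp
  have psplit: "Psi n D = g D u + g D v + (\<Sum>x\<in>{..<n}-{u}-{v}. g D x)" for D
  proof -
    have gP: "Psi n D = (\<Sum>x<n. g D x)" unfolding Psi_def g_def M_def by simp
    have "(\<Sum>x<n. g D x) = g D u + (\<Sum>x\<in>{..<n}-{u}. g D x)"
      by (rule sum.remove) (use un in auto)
    also have "(\<Sum>x\<in>{..<n}-{u}. g D x) = g D v + (\<Sum>x\<in>{..<n}-{u}-{v}. g D x)"
      by (rule sum.remove) (use un in auto)
    finally show ?thesis using gP by simp
  qed
  have prest: "(\<Sum>x\<in>{..<n}-{u}-{v}. g C' x) = (\<Sum>x\<in>{..<n}-{u}-{v}. g C x)"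
    by (rule sum.cong) (auto simp: gsame)
  show ?thesis
    using psplit[of C'] psplit[of C] prest gch[of u] gch[of v] unfolding C'_def[symmetric] by simp
qed

lemma part1:
  assumes n: "n \<ge> 2" and lo: "locally_optimal n C"
    and uv: "{u,v} \<in> Kedges n"
  shows "adeg n C u (C {u,v}) + adeg n C v (C {u,v}) \<le> 3"
proof (rule ccontr)
  define i where "i = C {u,v}"
  define M where "M = {1..n-1}"
  assume "\<not> ?thesis"
  then have big: "adeg n C u i + adeg n C v i \<ge> 4" unfolding i_def by simp
  have col: "is_coloring n C" using lo locally_optimal_def by auto
  have un: "u < n" "v < n" "u \<noteq> v" using Kedges_mem[OF uv] by auto
  have iM: "i \<in> M" using col uv unfolding is_coloring_def i_def M_def by auto
  have finM: "finite M" unfolding M_def by simp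
  have cardM: "card (M - {i}) = n - 2" using iM unfolding M_def by simp
  define s where "s \<mu> = adeg n C u \<mu> + adeg n C v \<mu>" for \<mu>
  have tot: "(\<Sum>\<mu>\<in>M. s \<mu>) = 2*(n-1)"
    unfolding s_def sum.distrib M_def using sum_adeg[OF col un(1)] sum_adeg[OF col un(2)] by simp
  have "(\<Sum>\<mu>\<in>M. s \<mu>) = s i + (\<Sum>\<mu>\<in>M-{i}. s \<mu>)" using sum.remove[OF finM iM] .
  obtain j where jM: "j \<in> M - {i}" and sj: "s j \<le> 1"
  proof (rule ccontr)
    assume "\<not> thesis"
    then have "\<forall>\<mu>\<in>M-{i}. 2 \<le> s \<mu>" using that by force
    then have "(\<Sum>\<mu>\<in>M-{i}. (2::nat)) \<le> (\<Sum>\<mu>\<in>M-{i}. s \<mu>)" by (intro sum_mono) auto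
    then have "2*(n-2) \<le> (\<Sum>\<mu>\<in>M-{i}. s \<mu>)" using cardM by simp
    moreover have "s i \<ge> 4" using big s_def by simp
    ultimately show False using tot \<open>(\<Sum>\<mu>\<in>M. s \<mu>) = s i + (\<Sum>\<mu>\<in>M-{i}. s \<mu>)\<close> n by linarith
  qed
  define C' where "C' = C({u,v} := j)"
  have col': "is_coloring n C'" using col jM unfolding is_coloring_def C'_def M_def by auto
  have "{e\<in>Kedges n. C' e \<noteq> C e} = {{u,v}}" using uv jM unfolding C'_def i_def by auto
  then have "Psi n C' \<ge> Psi n C" using lo col' unfolding locally_optimal_def by auto
  moreover have "Psi n C' + (adeg n C u i - 1) + (adeg n C v i - 1) = Psi n C + adeg n C u j + adeg n C v j"
    unfolding C'_def by (rule psi_change[OF uv]) (use i_def jM iM M_def in auto)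
  ultimately show False using big sj s_def[of j] by linarith
qed


theorem lemma1:
  fixes n :: nat and C :: "nat set \<Rightarrow> nat"
  assumes "n \<ge> 2" and "locally_optimal n C"
  shows "(\<forall>i u v. {u, v} \<in> Kedges n \<and> C {u, v} = i \<longrightarrow> adeg n C u i + adeg n C v i \<le> 3)
       \<and> (\<forall>i. \<exists>P. \<Union>P = color_class n C i \<and> (\<forall>p\<in>P. edge_or_P3 p)
                 \<and> (\<forall>p\<in>P. \<forall>q\<in>P. p \<noteq> q \<longrightarrow> \<Union>p \<inter> \<Union>q = {}))"
proof
  show P1: "\<forall>i u v. {u, v} \<in> Kedges n \<and> C {u, v} = i \<longrightarrow> adeg n C u i + adeg n C v i \<le> 3"
    using part1[OF assms] by blast
  show "\<forall>i. \<exists>P. \<Union>P = color_class n C i \<and> (\<forall>p\<in>P. edge_or_P3 p)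
                 \<and> (\<forall>p\<in>P. \<forall>q\<in>P. p \<noteq> q \<longrightarrow> \<Union>p \<inter> \<Union>q = {})"
  proof
    fix i
    let ?E = "color_class n C i"
    have cs: "{f\<in>?E. x\<in>f} = {e\<in>Kedges n. x\<in>e \<and> C e = i}" for x
      unfolding color_class_def by auto
    show "\<exists>P. \<Union>P = ?E \<and> (\<forall>p\<in>P. edge_or_P3 p) \<and> (\<forall>p\<in>P. \<forall>q\<in>P. p \<noteq> q \<longrightarrow> \<Union>p \<inter> \<Union>q = {})"
    proof (rule decomp)
      show "finite {f\<in>?E. x\<in>f}" for x unfolding cs by (simp add: Kedges_fin)
      show "\<exists>u v. u\<noteq>v \<and> e={u,v}" if "e \<in> ?E" for e
        using that unfolding color_class_def Kedges_def by auto
      show "card {f\<in>?E. u\<in>f} + card {f\<in>?E. v\<in>f} \<le> 3" if "{u,v} \<in> ?E" for u v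
        using that P1 unfolding cs adeg_def[symmetric] by (auto simp: color_class_def)
    qed
  qed
qed

end
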